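(* Let $D=(E,\mathcal{F})$ be a delta-matroid. Then ${}^{\partial}w_{D}(z)$ is a constant (i.e. equals some integer $k$) if and only if $|\mathcal{F}|=1$.
   Context: A delta-matroid is a set system $(E,\mathcal{F})$, $\mathcal{F}\ne\emptyset$ a family of subsets of finite $E$, satisfying: for all $X,Y\in\mathcal{F}$ and $u\in X\Delta Y$ there is $v\in X\Delta Y$ (possibly $v=u$) with $X\Delta\{u,v\}\in\mathcal{F}$. Twist: $D*A=(E,\{A\Delta X:X\in\mathcal{F}\})$. Width $w(D)$ = maximum minus minimum cardinality of feasible sets; twist polynomial ${}^{\partial}w_{D}(z)=\sum_{A\subseteq E}z^{w(D*A)}$. *)

theory Defs
  imports Main "HOL-Computational_Algebra.Polynomial"
begin

definition symdiff :: "'a set \<Rightarrow> 'a set \<Rightarrow> 'a set" (infixl "\<Delta>" 65) where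
  "symdiff X Y = (X - Y) \<union> (Y - X)"

definition delta_matroid :: "'a set \<Rightarrow> 'a set set \<Rightarrow> bool" where
  "delta_matroid E F \<longleftrightarrow> finite E \<and> F \<noteq> {} \<and> (\<forall>X\<in>F. X \<subseteq> E) \<and>
     (\<forall>X\<in>F. \<forall>Y\<in>F. \<forall>u\<in>X \<Delta> Y. \<exists>v\<in>X \<Delta> Y. X \<Delta> {u, v} \<in> F)"

definition twist :: "'a set set \<Rightarrow> 'a set \<Rightarrow> 'a set set" where
  "twist F A = (\<lambda>X. A \<Delta> X) ` F"

definition width :: "'a set set \<Rightarrow> nat" where
  "width F = Max (card ` F) - Min (card ` F)"

definition twist_poly :: "'a set \<Rightarrow> 'a set set \<Rightarrow> int poly" where
  "twist_poly E F = (\<Sum>A\<in>Pow E. monom 1 (width (twist F A)))"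

end

theory Submission
  imports Defs
begin

lemma width_pos:
  assumes fin: "finite E" and sub: "\<forall>Z\<in>F. Z \<subseteq> E" and X: "X \<in> F" and Y: "Y \<in> F" and ne: "X \<noteq> Y"
  shows "width (twist F X) > 0"
proof -
  have finF: "finite F" using sub fin by (meson Pow_iff finite_Pow_iff finite_subset subsetI)
  have ft: "finite (twist F X)" unfolding twist_def using finF by simp
  have e: "{} \<in> twist F X" unfolding twist_def using X by (force simp: symdiff_def)
  have d: "X \<Delta> Y \<in> twist F X" unfolding twist_def using Y by force
  have fd: "finite (X \<Delta> Y)" using sub X Y fin unfolding symdiff_def by (meson finite_Diff finite_Un finite_subset)
  have nd: "X \<Delta> Y \<noteq> {}" using ne unfolding symdiff_def by blast
  have c: "card (X \<Delta> Y) > 0" using fd nd by auto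
  have "Min (card ` twist F X) = 0"
    using ft e by (metis Min_le card.empty finite_imageI image_eqI le_zero_eq)
  moreover have "Max (card ` twist F X) \<ge> card (X \<Delta> Y)"
    using ft d by (simp add: Max_ge)
  ultimately show ?thesis using c unfolding width_def by linarith
qed

theorem mainTheorem6:
  fixes E :: "'a set" and F :: "'a set set"
  assumes "delta_matroid E F"
  shows "(\<exists>k::int. twist_poly E F = [:k:]) \<longleftrightarrow> card F = 1"
proof
  have fin: "finite E" and sub: "\<forall>Z\<in>F. Z \<subseteq> E" and ne: "F \<noteq> {}"
    using assms unfolding delta_matroid_def by auto
  have finF: "finite F" using sub fin by (meson Pow_iff finite_Pow_iff finite_subset subsetI)
  assume "\<exists>k::int. twist_poly E F = [:k:]"
  then obtain k where k: "twist_poly E F = [:k:]" by blast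
  show "card F = 1"
  proof (rule ccontr)
    assume "card F \<noteq> 1"
    with finF ne have "card F \<ge> 2" by (metis One_nat_def card_0_eq less_2_cases not_le)
    then obtain X Y where X: "X \<in> F" and Y: "Y \<in> F" and XY: "X \<noteq> Y"
      by (metis card_2_iff' card_le_Suc_iff numeral_2_eq_2 obtain_subset_with_card_n subsetD)
    define d where "d = width (twist F X)"
    have dpos: "d > 0" unfolding d_def using width_pos[OF fin sub X Y XY] .
    have XE: "X \<in> Pow E" using sub X by auto
    have "coeff (twist_poly E F) d = (\<Sum>A\<in>Pow E. coeff (monom (1::int) (width (twist F A))) d)"
      unfolding twist_poly_def by (simp add: coeff_sum)
    also have "\<dots> \<ge> coeff (monom (1::int) (width (twist F X))) d"
      by (rule member_le_sum) (use XE fin in \<open>auto simp: coeff_monom\<close>)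
    finally have "coeff (twist_poly E F) d \<ge> 1" by (simp add: d_def)
    moreover have "coeff (twist_poly E F) d = 0" using k dpos by (simp add: coeff_pCons split: nat.split)
    ultimately show False by simp
  qed
next
  assume "card F = 1"
  then obtain X where F: "F = {X}" using card_1_singletonE by blast
  have "\<And>A. width (twist F A) = 0" unfolding F twist_def width_def by simp
  then have "twist_poly E F = (\<Sum>A\<in>Pow E. monom 1 0)" unfolding twist_poly_def by simp
  also have "\<dots> = [:of_nat (card (Pow E)):]" by (simp add: monom_0 of_nat_poly)
  finally show "\<exists>k::int. twist_poly E F = [:k:]" by blast
qed

end
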